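(* Let $G$ be a graph on $V$ and let $W_1,W_2\subseteq V$ be disjoint, with $W_1$ reducible in $G$. Then $W_2$ is reducible in $\Gamma_{W_1}(G)$ if and only if $W_1\cup W_2$ is reducible in $G$, and in this case $\Gamma_{W_1\cup W_2}(G)=\Gamma_{W_2}(\Gamma_{W_1}(G))$.
   Context: A graph means a finite simple graph in which loops are allowed, with adjacency matrix $A$ over $\mathbf F_2$ ($A_{vv}=1$ iff $v$ has a loop). Let $\mathcal V$ be the $\mathbf F_2$-vector space with basis $V$ and $\mathcal E(x,y)=x^TAy$. For $W\subseteq V$, $\langle W\rangle$ is the span of $W$ and $\langle W\rangle^{\perp\mathcal E}=\{x\in\mathcal V:\mathcal E(x,w)=0\ \forall w\in\langle W\rangle\}$. $W$ is reducible in $G$ if $\langle W\rangle+\langle W\rangle^{\perp\mathcal E}=\mathcal V$. For reducible $W$, define $\mathcal E^W(x_1,x_2)=\mathcal E(x_1',x_2')$ where $x_i'\in\langle W\rangle^{\perp\mathcal E}$ are any vectors with $x_i-x_i'\in\langle W\rangle$ (well defined); the graph reduction $\Gamma_W(G)$ is the graph on vertex set $V\setminus W$ in which $v,w$ (possibly equal) are joined iff $\mathcal E^W(v,w)=1$. *)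

theory Defs
  imports Main
begin

text \<open>A vector of the F2-vector space
with basis V is identified with its support, a subset of V; addition is symmetric
difference.\<close>

type_synonym 'a graph = "'a set \<times> ('a \<Rightarrow> 'a \<Rightarrow> bool)"

definition is_graph :: "'a graph \<Rightarrow> bool" where
  "is_graph G \<longleftrightarrow> finite (fst G) \<and> (\<forall>u v. snd G u v = snd G v u)
     \<and> (\<forall>u v. snd G u v \<longrightarrow> u \<in> fst G \<and> v \<in> fst G)"

definition vecs :: "'a graph \<Rightarrow> 'a set set" where
  "vecs G = Pow (fst G)"

definition vadd :: "'a set \<Rightarrow> 'a set \<Rightarrow> 'a set" where
  "vadd x y = (x - y) \<union> (y - x)"

text \<open>E(x,y) = x^T A y over F2; True means 1.\<close>
definition bil :: "'a graph \<Rightarrow> 'a set \<Rightarrow> 'a set \<Rightarrow> bool" where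
  "bil G x y \<longleftrightarrow> odd (card {(u, v). u \<in> x \<and> v \<in> y \<and> snd G u v})"

text \<open>The span of a set W of basis vectors: all F2-combinations, i.e. subsets of W.\<close>
definition span2 :: "'a set \<Rightarrow> 'a set set" where
  "span2 W = Pow W"

definition perp :: "'a graph \<Rightarrow> 'a set \<Rightarrow> 'a set set" where
  "perp G W = {x \<in> vecs G. \<forall>w \<in> span2 W. \<not> bil G x w}"

definition reducible :: "'a graph \<Rightarrow> 'a set \<Rightarrow> bool" where
  "reducible G W \<longleftrightarrow> {vadd a b | a b. a \<in> span2 W \<and> b \<in> perp G W} = vecs G"

definition proj :: "'a graph \<Rightarrow> 'a set \<Rightarrow> 'a set \<Rightarrow> 'a set" where
  "proj G W x = (SOME x'. x' \<in> perp G W \<and> vadd x x' \<in> span2 W)"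

definition bilW :: "'a graph \<Rightarrow> 'a set \<Rightarrow> 'a set \<Rightarrow> 'a set \<Rightarrow> bool" where
  "bilW G W x y \<longleftrightarrow> bil G (proj G W x) (proj G W y)"

definition reduction :: "'a graph \<Rightarrow> 'a set \<Rightarrow> 'a graph" where
  "reduction G W = (fst G - W,
     \<lambda>v w. v \<in> fst G - W \<and> w \<in> fst G - W \<and> bilW G W {v} {w})"

end

theory Submission
  imports Defs
begin

lemma in_vadd: "z \<in> vadd x y \<longleftrightarrow> (z \<in> x) \<noteq> (z \<in> y)" unfolding vadd_def by auto
lemma vadd_sub3: "vadd a a' \<subseteq> W \<Longrightarrow> vadd b b' \<subseteq> W \<Longrightarrow> vadd (vadd a b) (vadd a' b') \<subseteq> W"
  unfolding subset_iff in_vadd by metis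
lemma vadd_sub2: "vadd a b \<subseteq> W \<Longrightarrow> vadd a c \<subseteq> W \<Longrightarrow> vadd b c \<subseteq> W"
  unfolding subset_iff in_vadd by metis
lemma vadd_cancel: "vadd (vadd x d) d = x" unfolding vadd_def by auto
lemma vadd_subI: "a \<subseteq> V \<Longrightarrow> b \<subseteq> V \<Longrightarrow> vadd a b \<subseteq> V" unfolding vadd_def by auto

lemma odd_card_vadd:
  assumes "finite A" "finite B"
  shows "odd (card (vadd A B)) = (odd (card A) \<noteq> odd (card B))"
proof -
  have e: "vadd A B = (A \<union> B) - (A \<inter> B)" unfolding vadd_def by auto
  have c1: "card (vadd A B) = card (A \<union> B) - card (A \<inter> B)"
    unfolding e by (rule card_Diff_subset) (use assms in auto)
  have c2: "card (A \<union> B) + card (A \<inter> B) = card A + card B"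
    using card_Un_Int[OF assms] by simp
  have "card (A \<inter> B) \<le> card (A \<union> B)" using assms by (intro card_mono) auto
  hence "card (vadd A B) + 2 * card (A \<inter> B) = card A + card B" using c1 c2 by linarith
  hence "even (card (vadd A B) + 2 * card (A \<inter> B)) = even (card A + card B)" by simp
  thus ?thesis by simp
qed

lemma graph_supp: assumes "is_graph H" "snd H u v" shows "u \<in> fst H \<and> v \<in> fst H"
proof -
  have "\<forall>u v. snd H u v \<longrightarrow> u \<in> fst H \<and> v \<in> fst H"
    using assms(1) unfolding is_graph_def by (rule conjunct2[OF conjunct2])
  thus ?thesis using assms(2) by blast
qed

lemma graph_sym: assumes "is_graph H" shows "snd H u v = snd H v u"
proof -
  have "\<forall>u v. snd H u v = snd H v u"
    using assms(1) unfolding is_graph_def by (rule conjunct1[OF conjunct2])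
  thus ?thesis by blast 
qed

lemma graph_fin: "is_graph H \<Longrightarrow> finite (fst H)"
  unfolding is_graph_def by (rule conjunct1)

lemma bil_add1:
  assumes g: "is_graph H"
  shows "bil H (vadd x y) z = (bil H x z \<noteq> bil H y z)"
proof -
  define S where "S = (\<lambda>x. {(u, v). u \<in> x \<and> v \<in> z \<and> snd H u v})"
  have sub: "S s \<subseteq> fst H \<times> fst H" for s
    using graph_supp[OF g] unfolding S_def by auto
  have ff: "finite (fst H \<times> fst H)" using graph_fin[OF g] by simp
  have fin: "finite (S s)" for s using finite_subset[OF sub ff] .
  have eq: "S (vadd x y) = vadd (S x) (S y)" unfolding vadd_def S_def by auto
  have "odd (card (S (vadd x y))) = (odd (card (S x)) \<noteq> odd (card (S y)))"
    unfolding eq using odd_card_vadd[OF fin[of x] fin[of y]] .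
  thus ?thesis unfolding bil_def S_def .
qed

lemma bil_sym:
  assumes g: "is_graph H"
  shows "bil H x y = bil H y x"
proof -
  have "{(u, v). u \<in> y \<and> v \<in> x \<and> snd H u v} = prod.swap ` {(u, v). u \<in> x \<and> v \<in> y \<and> snd H u v}"
  proof (rule set_eqI)
    fix p :: "'a \<times> 'a"
    obtain a b where p: "p = (a, b)" by (cases p)
    show "p \<in> {(u, v). u \<in> y \<and> v \<in> x \<and> snd H u v} \<longleftrightarrow> p \<in> prod.swap ` {(u, v). u \<in> x \<and> v \<in> y \<and> snd H u v}"
      unfolding p using graph_sym[OF g, of a b] by (auto simp: image_iff)
  qed
  moreover have "card (prod.swap ` {(u, v). u \<in> x \<and> v \<in> y \<and> snd H u v})
      = card {(u, v). u \<in> x \<and> v \<in> y \<and> snd H u v}"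
    by (rule card_image) (auto simp: inj_on_def)
  ultimately show ?thesis unfolding bil_def by simp
qed

lemma bil_add2:
  assumes g: "is_graph H"
  shows "bil H z (vadd x y) = (bil H z x \<noteq> bil H z y)"
  using bil_add1[OF g] bil_sym[OF g] by metis

lemma perp_vadd:
  assumes g: "is_graph H" and "a \<in> perp H W" "b \<in> perp H W"
  shows "vadd a b \<in> perp H W"
  using assms(2,3) bil_add1[OF g] unfolding perp_def vecs_def vadd_def by auto

lemma proj_spec:
  assumes red: "reducible H W" and x: "x \<subseteq> fst H"
  shows "proj H W x \<in> perp H W \<and> vadd x (proj H W x) \<subseteq> W"
proof -
  have "x \<in> vecs H" using x by (simp add: vecs_def)
  with red obtain a b where ab: "x = vadd a b" "a \<in> span2 W" "b \<in> perp H W"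
    unfolding reducible_def by blast
  have "vadd x b = a" using ab(1) unfolding vadd_def by auto
  hence "\<exists>x'. x' \<in> perp H W \<and> vadd x x' \<in> span2 W" using ab by blast
  hence "proj H W x \<in> perp H W \<and> vadd x (proj H W x) \<in> span2 W"
    unfolding proj_def by (rule someI_ex)
  thus ?thesis by (simp add: span2_def)
qed

lemma perp_shift:
  assumes g: "is_graph H" and x: "x' \<in> perp H W" and "vadd y y' \<subseteq> W"
  shows "bil H x' y = bil H x' y'"
proof -
  have "\<not> bil H x' (vadd y y')" using x assms(3) by (simp add: perp_def span2_def)
  thus ?thesis using bil_add2[OF g] by metis
qed

lemma bilW_rep:
  assumes g: "is_graph H" and red: "reducible H W" and x: "x \<subseteq> fst H" and y: "y \<subseteq> fst H"
    and x': "x' \<in> perp H W" and xx: "vadd x x' \<subseteq> W"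
  shows "bilW H W x y = bil H x' y"
proof -
  note px = proj_spec[OF red x] and py = proj_spec[OF red y]
  have "vadd (proj H W x) x' \<subseteq> W" using px xx unfolding vadd_def by blast
  hence "bil H (proj H W y) (proj H W x) = bil H (proj H W y) x'"
    using perp_shift[OF g] py by blast
  hence 1: "bil H (proj H W x) (proj H W y) = bil H x' (proj H W y)"
    using bil_sym[OF g] by metis
  have "vadd (proj H W y) y \<subseteq> W" using py unfolding vadd_def by blast
  hence "bil H x' (proj H W y) = bil H x' y" using perp_shift[OF g x'] by blast
  thus ?thesis using 1 by (simp add: bilW_def)
qed

lemma blin_agree:
  fixes F F' :: "'a set \<Rightarrow> 'a set \<Rightarrow> bool"
  assumes fin: "finite V"
   and F1: "\<And>x y z. x \<subseteq> V \<Longrightarrow> y \<subseteq> V \<Longrightarrow> z \<subseteq> V \<Longrightarrow> F (vadd x y) z = (F x z \<noteq> F y z)"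
   and F2: "\<And>x y z. x \<subseteq> V \<Longrightarrow> y \<subseteq> V \<Longrightarrow> z \<subseteq> V \<Longrightarrow> F z (vadd x y) = (F z x \<noteq> F z y)"
   and H1: "\<And>x y z. x \<subseteq> V \<Longrightarrow> y \<subseteq> V \<Longrightarrow> z \<subseteq> V \<Longrightarrow> F' (vadd x y) z = (F' x z \<noteq> F' y z)"
   and H2: "\<And>x y z. x \<subseteq> V \<Longrightarrow> y \<subseteq> V \<Longrightarrow> z \<subseteq> V \<Longrightarrow> F' z (vadd x y) = (F' z x \<noteq> F' z y)"
   and sing: "\<And>u v. u \<in> V \<Longrightarrow> v \<in> V \<Longrightarrow> F {u} {v} = F' {u} {v}"
   and xV: "x \<subseteq> V" and yV: "y \<subseteq> V"
  shows "F x y = F' x y"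
proof -
  have vins: "\<And>v A. v \<notin> A \<Longrightarrow> insert v A = vadd {v} A" by (auto simp: vadd_def)
  have e0: "vadd {} {} = {}" by (simp add: vadd_def)
  have Fl0: "F z {} = False" if "z \<subseteq> V" for z using F2[of "{}" "{}" z, unfolded e0] that by auto
  have Fr0: "F {} z = False" if "z \<subseteq> V" for z using F1[of "{}" "{}" z, unfolded e0] that by auto
  have Hl0: "F' z {} = False" if "z \<subseteq> V" for z using H2[of "{}" "{}" z, unfolded e0] that by auto
  have Hr0: "F' {} z = False" if "z \<subseteq> V" for z using H1[of "{}" "{}" z, unfolded e0] that by auto
  have step1: "F {u} y = F' {u} y" if u: "u \<in> V" and "finite y" "y \<subseteq> V" for u y
    using that(2,3)
  proof (induct y rule: finite_induct)
    case empty thus ?case using Fl0 Hl0 u by auto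
  next
    case (insert v A)
    have "F {u} (insert v A) = F {u} (vadd {v} A)" by (simp only: vins[OF insert(2)])
    also have "\<dots> = (F {u} {v} \<noteq> F {u} A)" using F2[of "{v}" A "{u}"] insert u by auto
    also have "\<dots> = (F' {u} {v} \<noteq> F' {u} A)" using sing[of u v] insert u by auto
    also have "\<dots> = F' {u} (vadd {v} A)" using H2[of "{v}" A "{u}"] insert u by auto
    also have "\<dots> = F' {u} (insert v A)" by (simp only: vins[OF insert(2)])
    finally show ?case .
  qed
  have step2: "F x y = F' x y" if "finite x" "x \<subseteq> V" for x
    using that
  proof (induct x rule: finite_induct)
    case empty thus ?case using Fr0 Hr0 yV by auto
  next
    case (insert v A)
    have "F (insert v A) y = F (vadd {v} A) y" by (simp only: vins[OF insert(2)])
    also have "\<dots> = (F {v} y \<noteq> F A y)" using F1[of "{v}" A y] insert yV by auto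
    also have "\<dots> = (F' {v} y \<noteq> F' A y)" using step1[of v y] finite_subset[OF yV fin] yV insert by auto
    also have "\<dots> = F' (vadd {v} A) y" using H1[of "{v}" A y] insert yV by auto
    also have "\<dots> = F' (insert v A) y" by (simp only: vins[OF insert(2)])
    finally show ?case .
  qed
  show ?thesis using step2 xV finite_subset[OF xV fin] by blast
qed

locale R1 =
  fixes G :: "'a graph" and W1 :: "'a set"
  assumes gr: "is_graph G" and red: "reducible G W1"
begin

lemma E1_rep: "s \<subseteq> fst G \<Longrightarrow> t \<subseteq> fst G \<Longrightarrow> s' \<in> perp G W1 \<Longrightarrow> vadd s s' \<subseteq> W1
   \<Longrightarrow> bilW G W1 s t = bil G s' t"
  by (rule bilW_rep[OF gr red])

lemma perp_sub: "x \<in> perp H W \<Longrightarrow> x \<subseteq> fst H"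
  by (simp add: perp_def vecs_def)

lemma E1_add1:
  assumes "s1 \<subseteq> fst G" "s2 \<subseteq> fst G" "t \<subseteq> fst G"
  shows "bilW G W1 (vadd s1 s2) t = (bilW G W1 s1 t \<noteq> bilW G W1 s2 t)"
proof -
  note p1 = proj_spec[OF red assms(1)] and p2 = proj_spec[OF red assms(2)]
  have a: "vadd (proj G W1 s1) (proj G W1 s2) \<in> perp G W1" using perp_vadd[OF gr] p1 p2 by blast
  have b: "vadd (vadd s1 s2) (vadd (proj G W1 s1) (proj G W1 s2)) \<subseteq> W1"
    by (rule vadd_sub3[OF conjunct2[OF p1] conjunct2[OF p2]])
  have c: "vadd s1 s2 \<subseteq> fst G" using assms vadd_subI by blast
  have "bilW G W1 (vadd s1 s2) t = bil G (vadd (proj G W1 s1) (proj G W1 s2)) t"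
    using E1_rep[OF c assms(3) a b] .
  also have "\<dots> = (bil G (proj G W1 s1) t \<noteq> bil G (proj G W1 s2) t)" by (rule bil_add1[OF gr])
  also have "\<dots> = (bilW G W1 s1 t \<noteq> bilW G W1 s2 t)"
    using E1_rep[OF assms(1) assms(3) conjunct1[OF p1] conjunct2[OF p1]]
      E1_rep[OF assms(2) assms(3) conjunct1[OF p2] conjunct2[OF p2]] by simp
  finally show ?thesis .
qed

lemma E1_add2:
  assumes "s \<subseteq> fst G" "t1 \<subseteq> fst G" "t2 \<subseteq> fst G"
  shows "bilW G W1 s (vadd t1 t2) = (bilW G W1 s t1 \<noteq> bilW G W1 s t2)"
proof -
  note p = proj_spec[OF red assms(1)]
  have c: "vadd t1 t2 \<subseteq> fst G" using assms vadd_subI by blast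
  show ?thesis
    using E1_rep[OF assms(1) c conjunct1[OF p] conjunct2[OF p]]
      E1_rep[OF assms(1) assms(2) conjunct1[OF p] conjunct2[OF p]]
      E1_rep[OF assms(1) assms(3) conjunct1[OF p] conjunct2[OF p]]
      bil_add2[OF gr] by simp
qed

lemma E1_sym: "bilW G W1 s t = bilW G W1 t s"
  unfolding bilW_def using bil_sym[OF gr] by metis

lemma G1_graph: "is_graph (reduction G W1)"
  using gr E1_sym unfolding is_graph_def reduction_def by auto

lemma bilG1:
  assumes "s \<subseteq> fst G - W1" "t \<subseteq> fst G - W1"
  shows "bil (reduction G W1) s t = bilW G W1 s t"
proof (rule blin_agree[where V="fst G - W1"])
  show "finite (fst G - W1)" using gr by (simp add: is_graph_def)
  show "bil (reduction G W1) (vadd x y) z = (bil (reduction G W1) x z \<noteq> bil (reduction G W1) y z)"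
    for x y z using bil_add1[OF G1_graph] .
  show "bil (reduction G W1) z (vadd x y) = (bil (reduction G W1) z x \<noteq> bil (reduction G W1) z y)"
    for x y z using bil_add2[OF G1_graph] .
  show "bilW G W1 (vadd x y) z = (bilW G W1 x z \<noteq> bilW G W1 y z)"
    if "x \<subseteq> fst G - W1" "y \<subseteq> fst G - W1" "z \<subseteq> fst G - W1" for x y z
    by (rule E1_add1) (use that in auto)
  show "bilW G W1 z (vadd x y) = (bilW G W1 z x \<noteq> bilW G W1 z y)"
    if "x \<subseteq> fst G - W1" "y \<subseteq> fst G - W1" "z \<subseteq> fst G - W1" for x y z
    by (rule E1_add2) (use that in auto)
  show "bil (reduction G W1) {u} {v} = bilW G W1 {u} {v}"
    if "u \<in> fst G - W1" "v \<in> fst G - W1" for u v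
  proof -
    have "{(a, b). a \<in> {u} \<and> b \<in> {v} \<and> snd (reduction G W1) a b}
        = (if bilW G W1 {u} {v} then {(u, v)} else {})"
      using that by (auto simp: reduction_def)
    thus ?thesis unfolding bil_def by simp
  qed
qed (use assms in auto)

lemma K:
  assumes "d \<in> perp G W1" "c \<subseteq> fst G - W1" "vadd c d \<subseteq> W1" "w \<subseteq> fst G - W1"
  shows "bil (reduction G W1) c w = bil G d w"
  using bilG1[OF assms(2,4)] E1_rep[of c w d] assms by auto

end

theorem mainTheorem6:
  fixes G :: "'a graph" and W1 W2 :: "'a set"
  assumes "is_graph G"
    and "W1 \<subseteq> fst G" and "W2 \<subseteq> fst G" and "W1 \<inter> W2 = {}"
    and "reducible G W1"
  shows "(reducible (reduction G W1) W2 \<longleftrightarrow> reducible G (W1 \<union> W2))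
    \<and> (reducible G (W1 \<union> W2) \<longrightarrow>
         reduction G (W1 \<union> W2) = reduction (reduction G W1) W2)"
proof -
  interpret R1 G W1 using assms(1,5) by unfold_locales
  note gr = assms(1)
  have W2V: "W2 \<subseteq> fst G - W1" using assms(3,4) by blast
  have fG1: "fst (reduction G W1) = fst G - W1" by (simp add: reduction_def)
  have Psplit: "d \<in> perp G (W1 \<union> W2) \<longleftrightarrow> d \<in> perp G W1 \<and> (\<forall>w. w \<subseteq> W2 \<longrightarrow> \<not> bil G d w)" for d
  proof
    assume "d \<in> perp G (W1 \<union> W2)" thus "d \<in> perp G W1 \<and> (\<forall>w. w \<subseteq> W2 \<longrightarrow> \<not> bil G d w)"
      by (auto simp: perp_def span2_def)
  next
    assume h: "d \<in> perp G W1 \<and> (\<forall>w. w \<subseteq> W2 \<longrightarrow> \<not> bil G d w)"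
    have "\<not> bil G d w" if "w \<subseteq> W1 \<union> W2" for w
    proof -
      have "w = vadd (w \<inter> W1) (w \<inter> W2)" using that assms(4) unfolding vadd_def by auto
      hence "bil G d w = (bil G d (w \<inter> W1) \<noteq> bil G d (w \<inter> W2))" using bil_add2[OF gr] by metis
      moreover have "\<not> bil G d (w \<inter> W1)" using h by (auto simp: perp_def span2_def)
      ultimately show ?thesis using h by auto
    qed
    thus "d \<in> perp G (W1 \<union> W2)" using h by (auto simp: perp_def span2_def)
  qed
  have perpG1: "c \<in> perp (reduction G W1) W2 \<longleftrightarrow> c \<subseteq> fst G - W1 \<and> (\<forall>w. w \<subseteq> W2 \<longrightarrow> \<not> bil (reduction G W1) c w)" for c
    unfolding perp_def vecs_def span2_def fG1 by auto
  have lift: "d \<in> perp G (W1 \<union> W2)"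
    if c: "c \<in> perp (reduction G W1) W2" and d: "d \<in> perp G W1" and cd: "vadd c d \<subseteq> W1" for c d
  proof -
    have "\<not> bil G d w" if "w \<subseteq> W2" for w
      using K[OF d _ cd, of w] c perpG1 W2V that by auto
    thus ?thesis using Psplit d by blast
  qed
  have fwd: "reducible G (W1 \<union> W2)" if rG1: "reducible (reduction G W1) W2"
  proof -
    have "x \<in> {vadd a b |a b. a \<in> span2 (W1 \<union> W2) \<and> b \<in> perp G (W1 \<union> W2)}" if x: "x \<in> vecs G" for x
    proof -
      obtain a1 b1 where ab1: "x = vadd a1 b1" "a1 \<subseteq> W1" "b1 \<in> perp G W1"
        using x red unfolding reducible_def span2_def by blast
      have "b1 - W1 \<in> vecs (reduction G W1)" using ab1(3) by (auto simp: perp_def vecs_def fG1)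
      then obtain a2 c where ac: "b1 - W1 = vadd a2 c" "a2 \<subseteq> W2" "c \<in> perp (reduction G W1) W2"
        using rG1 unfolding reducible_def span2_def by blast
      have cV: "c \<subseteq> fst G" using ac(3) perpG1 by blast
      define d where "d = proj G W1 c"
      note ds = proj_spec[OF red cV, folded d_def]
      have dP: "d \<in> perp G (W1 \<union> W2)" using lift[OF ac(3)] ds by blast
      have "vadd x d \<subseteq> W1 \<union> W2"
      proof
        fix z assume z: "z \<in> vadd x d"
        show "z \<in> W1 \<union> W2"
        proof (rule ccontr)
          assume nz: "z \<notin> W1 \<union> W2"
          have "(z \<in> x) = (z \<in> b1)" using ab1(1,2) nz by (auto simp: in_vadd)
          moreover have "(z \<in> b1) = (z \<in> c)"
          proof -
            have "(z \<in> b1) = (z \<in> b1 - W1)" using nz by simp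
            also have "\<dots> = (z \<in> c)" unfolding ac(1) using ac(2) nz by (auto simp: in_vadd)
            finally show ?thesis .
          qed
          moreover have "(z \<in> c) = (z \<in> d)" using ds nz by (auto simp: in_vadd)
          ultimately show False using z by (auto simp: in_vadd)
        qed
      qed
      moreover have "x = vadd (vadd x d) d" by (rule vadd_cancel[symmetric])
      ultimately show ?thesis using dP unfolding span2_def by blast
    qed
    moreover have "y \<in> vecs G" if "y \<in> {vadd a b |a b. a \<in> span2 (W1 \<union> W2) \<and> b \<in> perp G (W1 \<union> W2)}" for y
      using that assms(2,3) by (auto simp: vecs_def span2_def perp_def vadd_def)
    ultimately show ?thesis unfolding reducible_def by blast
  qed
  have bwd: "reducible (reduction G W1) W2" if rW: "reducible G (W1 \<union> W2)"
  proof -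
    have "x \<in> {vadd a b |a b. a \<in> span2 W2 \<and> b \<in> perp (reduction G W1) W2}"
      if x: "x \<in> vecs (reduction G W1)" for x
    proof -
      have xV: "x \<subseteq> fst G - W1" using x by (simp add: vecs_def fG1)
      hence "x \<in> vecs G" by (auto simp: vecs_def)
      then obtain a b where ab: "x = vadd a b" "a \<subseteq> W1 \<union> W2" "b \<in> perp G (W1 \<union> W2)"
        using rW unfolding reducible_def span2_def by blast
      have bP: "b \<in> perp G W1" using Psplit ab(3) by blast
      have cV: "b - W1 \<subseteq> fst G - W1" using bP by (auto simp: perp_def vecs_def)
      have cb: "vadd (b - W1) b \<subseteq> W1" unfolding vadd_def by auto
      have cP: "b - W1 \<in> perp (reduction G W1) W2"
      proof -
        have "\<not> bil (reduction G W1) (b - W1) w" if "w \<subseteq> W2" for w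
          using K[OF bP cV cb, of w] Psplit[of b] ab(3) W2V that by auto
        thus ?thesis using perpG1 cV by blast
      qed
      have "vadd x (b - W1) \<subseteq> W2"
      proof
        fix z assume z: "z \<in> vadd x (b - W1)"
        have zW1: "z \<notin> W1" using z xV by (auto simp: in_vadd)
        have zx: "(z \<in> x) = ((z \<in> a) \<noteq> (z \<in> b))" using ab(1) by (simp add: in_vadd)
        have "z \<in> a" using z zW1 zx by (auto simp: in_vadd)
        thus "z \<in> W2" using ab(2) zW1 by auto
      qed
      moreover have "x = vadd (vadd x (b - W1)) (b - W1)" by (rule vadd_cancel[symmetric])
      ultimately show ?thesis using cP unfolding span2_def by blast
    qed
    moreover have "y \<in> vecs (reduction G W1)"
      if "y \<in> {vadd a b |a b. a \<in> span2 W2 \<and> b \<in> perp (reduction G W1) W2}" for y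
      using that W2V by (auto simp: vecs_def span2_def perp_def vadd_def fG1)
    ultimately show ?thesis unfolding reducible_def by blast
  qed
  have eq: "reduction G (W1 \<union> W2) = reduction (reduction G W1) W2" if rW: "reducible G (W1 \<union> W2)"
  proof -
    have rG1: "reducible (reduction G W1) W2" using bwd rW .
    have key: "bilW G (W1 \<union> W2) x y = bilW (reduction G W1) W2 x y"
      if xV: "x \<subseteq> fst G - W1" and yV: "y \<subseteq> fst G - W1" for x y
    proof -
      define rx where "rx = proj (reduction G W1) W2 x"
      define ry where "ry = proj (reduction G W1) W2 y"
      note rxs = proj_spec[OF rG1, of x, folded rx_def, unfolded fG1, OF xV]
      note rys = proj_spec[OF rG1, of y, folded ry_def, unfolded fG1, OF yV]
      have rxV: "rx \<subseteq> fst G - W1" using rxs perpG1 by blast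
      have ryV: "ry \<subseteq> fst G - W1" using rys perpG1 by blast
      define d where "d = proj G W1 rx"
      note ds = proj_spec[OF red, of rx, folded d_def] rxV
      have dP: "d \<in> perp G (W1 \<union> W2)" using lift rxs ds by blast
      have xd: "vadd x d \<subseteq> W1 \<union> W2" using rxs ds by (auto simp: in_vadd subset_iff)
      have "bilW G (W1 \<union> W2) x y = bil G d y"
        using bilW_rep[OF gr rW _ _ dP xd] xV yV by blast
      also have "\<dots> = bil G d ry"
        using perp_shift[OF gr dP, of y ry] rys by (auto simp: in_vadd subset_iff)
      also have "\<dots> = bilW G W1 rx ry"
        using E1_rep[of rx ry d] rxV ryV ds by auto
      also have "\<dots> = bil (reduction G W1) rx ry" using bilG1[OF rxV ryV] by simp
      also have "\<dots> = bilW (reduction G W1) W2 x y" by (simp add: bilW_def rx_def ry_def)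
      finally show ?thesis .
    qed
    have f: "fst G - (W1 \<union> W2) = fst (reduction G W1) - W2" by (auto simp: fG1)
    show ?thesis
      unfolding reduction_def[of G "W1 \<union> W2"] reduction_def[of "reduction G W1" W2]
      using key f fG1 by (auto intro!: ext)
  qed
  show ?thesis using fwd bwd eq by blast
qed

end
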